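(* Let $x=(x_1,x_2,x_3,x_4)\in(0,1)^4$ and $y=(y_1,y_2,y_3,y_4)\in(0,1)^4$, and write $\bar z:=1-z$. Let $$\mathbf M=\begin{pmatrix} x_1y_1 & x_2y_3 & x_3y_2 & x_4y_4\\ x_1\bar y_1 & x_2\bar y_3 & x_3\bar y_2 & x_4\bar y_4\\ \bar x_1 y_1 & \bar x_2 y_3 & \bar x_3 y_2 & \bar x_4 y_4\\ \bar x_1\bar y_1 & \bar x_2\bar y_3 & \bar x_3\bar y_2 & \bar x_4\bar y_4\end{pmatrix},$$ and let $\mathbf p_{\mathrm e}=(p_{\mathrm{CCe}},p_{\mathrm{CDe}},p_{\mathrm{DCe}},p_{\mathrm{DDe}})^{\mathrm T}$ be the unique probability vector with $\mathbf M\mathbf p_{\mathrm e}=\mathbf p_{\mathrm e}$, regarded as a function of $x_1$ (all other variables fixed). Put $\mathbf p_{\mathrm{CC(C)}}=(y_1,\bar y_1,0,0)^{\mathrm T}$ and $\mathbf p_{\mathrm{CC(D)}}=(0,0,y_1,\bar y_1)^{\mathrm T}$. Then the series below converges and $$\frac{\partial \mathbf p_{\mathrm e}}{\partial x_1}=p_{\mathrm{CCe}}\lim_{n\to\infty}\sum_{t=0}^{n}\mathbf M^t\bigl(\mathbf p_{\mathrm{CC(C)}}-\mathbf p_{\mathrm{CC(D)}}\bigr).$$ Consequently, for any payoff vector $\mathbf u=(R,S,T,P)^{\mathrm T}$, the learning dynamics $\dot x_1=x_1\bar x_1\,p_{\mathrm{CCe}}\sum_{t=0}^{\infty}\mathbf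 M^t(\mathbf p_{\mathrm{CC(C)}}-\mathbf p_{\mathrm{CC(D)}})\cdot\mathbf u$ coincide with $\dot x_1=x_1\bar x_1\,\frac{\partial\mathbf p_{\mathrm e}}{\partial x_1}\cdot\mathbf u$.
   Context: Setting: iterated two-player prisoner's dilemma with memory-one strategies. The states of one round are ordered CC, CD, DC, DD (own action first, opponent's second, from player $x$'s viewpoint). $x_i$ (resp. $y_i$) is the probability that player $x$ (resp. the opponent $y$) cooperates when the previous round's outcome, from its own viewpoint, was the $i$-th state. $\mathbf M$ is the Markov transition matrix of the outcome distribution (column-stochastic, $\mathbf p'=\mathbf M\mathbf p$), and $\mathbf p_{\mathrm e}$ its stationary distribution. *)

theory Defs
  imports "HOL-Analysis.Analysis"
begin

text \<open>States are indexed 0 = CC, 1 = CD, 2 = DC, 3 = DD (own action first).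
  Strategies x, y :: nat \<Rightarrow> real, with x 0, ..., x 3 standing for x_1, ..., x_4.
  Vectors are nat \<Rightarrow> real (indices 0..3), matrices nat \<Rightarrow> nat \<Rightarrow> real (row, column).\<close>

definition opp_state :: "nat \<Rightarrow> nat" where
  "opp_state j = (if j = 1 then 2 else if j = 2 then 1 else j)"

definition trans_mat :: "(nat \<Rightarrow> real) \<Rightarrow> (nat \<Rightarrow> real) \<Rightarrow> nat \<Rightarrow> nat \<Rightarrow> real" where
  "trans_mat x y i j =
     (let a = x j; b = y (opp_state j) in
      if i = 0 then a * b
      else if i = 1 then a * (1 - b)
      else if i = 2 then (1 - a) * b
      else if i = 3 then (1 - a) * (1 - b)
      else 0)"

definition mat_vec :: "(nat \<Rightarrow> nat \<Rightarrow> real) \<Rightarrow> (nat \<Rightarrow> real) \<Rightarrow> nat \<Rightarrow> real" where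
  "mat_vec A v = (\<lambda>i. \<Sum>j<4. A i j * v j)"

primrec mat_pow_vec :: "(nat \<Rightarrow> nat \<Rightarrow> real) \<Rightarrow> nat \<Rightarrow> (nat \<Rightarrow> real) \<Rightarrow> nat \<Rightarrow> real" where
  "mat_pow_vec A 0 v = v"
| "mat_pow_vec A (Suc t) v = mat_vec A (mat_pow_vec A t v)"

definition prob_vec :: "(nat \<Rightarrow> real) \<Rightarrow> bool" where
  "prob_vec p \<longleftrightarrow> (\<forall>i<4. p i \<ge> 0) \<and> (\<Sum>i<4. p i) = 1 \<and> (\<forall>i\<ge>4. p i = 0)"

definition stat_dist :: "(nat \<Rightarrow> real) \<Rightarrow> (nat \<Rightarrow> real) \<Rightarrow> nat \<Rightarrow> real" where
  "stat_dist x y = (THE p. prob_vec p \<and> (\<forall>i<4. mat_vec (trans_mat x y) p i = p i))"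

definition p_CCC :: "(nat \<Rightarrow> real) \<Rightarrow> nat \<Rightarrow> real" where
  "p_CCC y i = (if i = 0 then y 0 else if i = 1 then 1 - y 0 else 0)"

definition p_CCD :: "(nat \<Rightarrow> real) \<Rightarrow> nat \<Rightarrow> real" where
  "p_CCD y i = (if i = 2 then y 0 else if i = 3 then 1 - y 0 else 0)"

end

theory Submission
  imports Defs
begin

definition n1 :: "(nat \<Rightarrow> real) \<Rightarrow> real" where
  "n1 v = (\<Sum>i<4. \<bar>v i\<bar>)"

lemma mat_vec_cong: "(\<And>j. j < 4 \<Longrightarrow> u j = v j) \<Longrightarrow> mat_vec A u = mat_vec A v"
  unfolding mat_vec_def by (intro ext sum.cong) auto

locale pstoch =
  fixes A :: "nat \<Rightarrow> nat \<Rightarrow> real" and e :: real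
  assumes e_pos: "e > 0"
    and ent: "\<And>i j. i < 4 \<Longrightarrow> j < 4 \<Longrightarrow> e \<le> A i j"
    and col: "\<And>j. j < 4 \<Longrightarrow> (\<Sum>i<4. A i j) = 1"
begin

lemma e_le: "4 * e \<le> 1"
proof -
  have "(\<Sum>i<4::nat. e) \<le> (\<Sum>i<4. A i 0)" by (intro sum_mono ent) auto
  then show ?thesis using col[of 0] by simp
qed

lemma sum_mv: "(\<Sum>i<4. mat_vec A v i) = (\<Sum>j<4. v j)"
proof -
  have "(\<Sum>i<4. mat_vec A v i) = (\<Sum>j<4. (\<Sum>i<4. A i j) * v j)"
    unfolding mat_vec_def by (subst sum.swap) (simp add: sum_distrib_right)
  also have "\<dots> = (\<Sum>j<4. v j)" by (intro sum.cong) (auto simp: col)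
  finally show ?thesis .
qed

lemma sum_pow: "(\<Sum>i<4. mat_pow_vec A t v i) = (\<Sum>j<4. v j)"
  by (induction t) (auto simp: sum_mv)

lemma contr:
  assumes "(\<Sum>j<4. v j) = 0"
  shows "n1 (mat_vec A v) \<le> (1 - 4 * e) * n1 v"
proof -
  have eq: "mat_vec A v i = (\<Sum>j<4. (A i j - e) * v j)" for i
  proof -
    have "(\<Sum>j<4. (A i j - e) * v j) = mat_vec A v i - e * (\<Sum>j<4. v j)"
      unfolding mat_vec_def by (simp add: algebra_simps sum_subtractf sum_distrib_left)
    then show ?thesis using assms by simp
  qed
  have le: "\<bar>mat_vec A v i\<bar> \<le> (\<Sum>j<4. (A i j - e) * \<bar>v j\<bar>)" if "i < 4" for i
  proof -
    have "\<bar>mat_vec A v i\<bar> \<le> (\<Sum>j<4. \<bar>(A i j - e) * v j\<bar>)" unfolding eq by (rule sum_abs)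
    also have "\<dots> = (\<Sum>j<4. (A i j - e) * \<bar>v j\<bar>)"
      using ent[OF that] by (intro sum.cong) (auto simp: abs_mult)
    finally show ?thesis .
  qed
  have "n1 (mat_vec A v) \<le> (\<Sum>i<4. \<Sum>j<4. (A i j - e) * \<bar>v j\<bar>)"
    unfolding n1_def by (intro sum_mono le) auto
  also have "\<dots> = (\<Sum>j<4. (\<Sum>i<4. (A i j - e)) * \<bar>v j\<bar>)"
    by (subst sum.swap) (simp add: sum_distrib_right)
  also have "\<dots> = (\<Sum>j<4. (1 - 4 * e) * \<bar>v j\<bar>)"
    by (intro sum.cong) (auto simp: sum_subtractf col)
  also have "\<dots> = (1 - 4 * e) * n1 v" unfolding n1_def by (simp add: sum_distrib_left)
  finally show ?thesis .
qed

lemma pow_contr: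
  assumes "(\<Sum>j<4. v j) = 0"
  shows "n1 (mat_pow_vec A t v) \<le> (1 - 4 * e) ^ t * n1 v"
proof (induction t)
  case 0 then show ?case by simp
next
  case (Suc t)
  have "n1 (mat_pow_vec A (Suc t) v) \<le> (1 - 4 * e) * n1 (mat_pow_vec A t v)"
    using contr[of "mat_pow_vec A t v"] sum_pow[of t v] assms by simp
  also have "\<dots> \<le> (1 - 4 * e) * ((1 - 4 * e) ^ t * n1 v)"
    using Suc e_le by (intro mult_left_mono) auto
  finally show ?case by simp
qed

lemma abs_le_n1: "i < 4 \<Longrightarrow> \<bar>v i\<bar> \<le> n1 v"
  unfolding n1_def by (rule member_le_sum) auto

lemma summ:
  assumes "(\<Sum>j<4. v j) = 0" "i < 4"
  shows "summable (\<lambda>t. mat_pow_vec A t v i)"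
proof (rule summable_comparison_test)
  show "\<exists>N. \<forall>n\<ge>N. norm (mat_pow_vec A n v i) \<le> n1 v * (1 - 4 * e) ^ n"
  proof (intro exI allI impI)
    fix n :: nat
    have "\<bar>mat_pow_vec A n v i\<bar> \<le> n1 (mat_pow_vec A n v)" by (rule abs_le_n1[OF assms(2)])
    also have "\<dots> \<le> (1 - 4 * e) ^ n * n1 v" by (rule pow_contr[OF assms(1)])
    finally show "norm (mat_pow_vec A n v i) \<le> n1 v * (1 - 4 * e) ^ n" by (simp add: mult.commute)
  qed
  show "summable (\<lambda>n. n1 v * (1 - 4 * e) ^ n)"
    using e_pos e_le by (intro summable_mult summable_geometric) auto
qed

definition S :: "(nat \<Rightarrow> real) \<Rightarrow> nat \<Rightarrow> real" where
  "S v i = (\<Sum>t. mat_pow_vec A t v i)"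

lemma S_fix:
  assumes "(\<Sum>j<4. v j) = 0" "i < 4"
  shows "mat_vec A (S v) i = S v i - v i"
proof -
  have "mat_vec A (S v) i = (\<Sum>j<4. \<Sum>t. A i j * mat_pow_vec A t v j)"
    unfolding mat_vec_def S_def by (intro sum.cong refl suminf_mult[symmetric] summ assms) auto
  also have "\<dots> = (\<Sum>t. \<Sum>j<4. A i j * mat_pow_vec A t v j)"
    by (rule suminf_sum[symmetric]) (auto intro!: summable_mult summ assms)
  also have "\<dots> = (\<Sum>t. mat_pow_vec A (Suc t) v i)"
    by (simp add: mat_vec_def)
  also have "\<dots> = S v i - v i"
    unfolding S_def using suminf_split_head[OF summ[OF assms]] by simp
  finally show ?thesis .
qed

lemma S_sum:
  assumes "(\<Sum>j<4. v j) = 0"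
  shows "(\<Sum>i<4. S v i) = 0"
proof -
  have "(\<Sum>i<4. S v i) = (\<Sum>t. \<Sum>i<4. mat_pow_vec A t v i)"
    unfolding S_def by (rule suminf_sum[symmetric]) (auto intro!: summ assms)
  also have "\<dots> = 0" using sum_pow assms by simp
  finally show ?thesis .
qed

lemma uniq0:
  assumes "\<And>i. i < 4 \<Longrightarrow> mat_vec A w i = w i" "(\<Sum>j<4. w j) = 0" "i < 4"
  shows "w i = 0"
proof -
  have "n1 (mat_vec A w) = n1 w" unfolding n1_def using assms(1) by simp
  then have "n1 w \<le> (1 - 4 * e) * n1 w" using contr[OF assms(2)] by simp
  moreover have "n1 w \<ge> 0" unfolding n1_def by (auto intro: sum_nonneg)
  ultimately have "4 * e * n1 w \<le> 0" by (simp add: algebra_simps)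
  then have "n1 w \<le> 0" using e_pos by (simp add: mult_le_0_iff)
  with \<open>n1 w \<ge> 0\<close> have "n1 w = 0" by simp
  then show ?thesis using abs_le_n1[OF assms(3), of w] by simp
qed

lemma pow_diff: "mat_pow_vec A t (\<lambda>k. u k - v k) i = mat_pow_vec A t u i - mat_pow_vec A t v i"
proof (induction t arbitrary: i)
  case 0 then show ?case by simp
next
  case (Suc t) then show ?case by (simp add: mat_vec_def right_diff_distrib sum_subtractf)
qed

lemma pow_nonneg: "(\<And>j. j < 4 \<Longrightarrow> v j \<ge> 0) \<Longrightarrow> i < 4 \<Longrightarrow> mat_pow_vec A t v i \<ge> 0"
proof (induction t arbitrary: i)
  case 0 then show ?case by simp
next
  case (Suc t)
  have "\<And>j. j < 4 \<Longrightarrow> A i j \<ge> 0" using ent[OF Suc(3)] e_pos by (meson less_le_trans less_imp_le)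
  then show ?case using Suc by (auto simp: mat_vec_def intro!: sum_nonneg mult_nonneg_nonneg)
qed

lemma pow_comm: "mat_pow_vec A t (mat_vec A v) = mat_pow_vec A (Suc t) v"
  by (induction t) auto

lemma exists: "\<exists>p. prob_vec p \<and> (\<forall>i<4. mat_vec A p i = p i)"
proof -
  define e0 :: "nat \<Rightarrow> real" where "e0 = (\<lambda>k. if k = 0 then 1 else 0)"
  define w where "w = (\<lambda>k. mat_vec A e0 k - e0 k)"
  have sw: "(\<Sum>j<4. w j) = 0" unfolding w_def by (simp add: sum_subtractf sum_mv)
  define p where "p = (\<lambda>i. if i < 4 then e0 i + S w i else 0)"
  have fx: "mat_vec A p i = p i" if "i < 4" for i
  proof -
    have "mat_vec A p = mat_vec A (\<lambda>k. e0 k + S w k)" by (rule mat_vec_cong) (simp add: p_def)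
    then have "mat_vec A p i = mat_vec A e0 i + mat_vec A (S w) i"
      by (simp add: mat_vec_def algebra_simps sum.distrib)
    also have "\<dots> = p i" using S_fix[OF sw that] that by (simp add: p_def w_def)
    finally show ?thesis .
  qed
  have nn: "p i \<ge> 0" if "i < 4" for i
  proof -
    have ps: "(\<lambda>n. \<Sum>t<n. mat_pow_vec A t w i) \<longlonglongrightarrow> S w i"
      unfolding S_def using summ[OF sw that] by (simp add: summable_LIMSEQ)
    have "(\<Sum>t<n. mat_pow_vec A t w i) = mat_pow_vec A n e0 i - e0 i" for n
    proof -
      have "(\<Sum>t<n. mat_pow_vec A t w i) = (\<Sum>t<n. mat_pow_vec A (Suc t) e0 i - mat_pow_vec A t e0 i)"
        unfolding w_def by (intro sum.cong refl) (simp add: pow_diff pow_comm)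
      also have "\<dots> = mat_pow_vec A n e0 i - e0 i" by (subst sum_lessThan_telescope) simp
      finally show ?thesis .
    qed
    moreover have "mat_pow_vec A n e0 i \<ge> 0" for n
      using that by (intro pow_nonneg) (auto simp: e0_def)
    ultimately have "\<forall>n. (\<Sum>t<n. mat_pow_vec A t w i) \<ge> - e0 i" by simp
    then have "S w i \<ge> - e0 i" using ps by (intro LIMSEQ_le_const) auto
    then show ?thesis using that by (simp add: p_def)
  qed
  have "(\<Sum>i<4. p i) = (\<Sum>i<4. e0 i) + (\<Sum>i<4. S w i)"
    by (simp add: p_def sum.distrib)
  also have "\<dots> = 1" using S_sum[OF sw] by (simp add: e0_def)
  finally have "(\<Sum>i<4. p i) = 1" .
  then have "prob_vec p" unfolding prob_vec_def using nn by (auto simp: p_def)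
  then show ?thesis using fx by blast
qed

lemma unique:
  assumes "prob_vec p" "\<forall>i<4. mat_vec A p i = p i"
    "prob_vec q" "\<forall>i<4. mat_vec A q i = q i"
  shows "p = q"
proof
  fix i
  show "p i = q i"
  proof (cases "i < 4")
    case True
    have "(\<lambda>k. p k - q k) i = 0"
    proof (rule uniq0)
      show "mat_vec A (\<lambda>k. p k - q k) j = p j - q j" if "j < 4" for j
        using assms that by (simp add: mat_vec_def algebra_simps sum_subtractf)
      show "(\<Sum>j<4. p j - q j) = 0" using assms by (simp add: prob_vec_def sum_subtractf)
    qed fact
    then show ?thesis by simp
  next
    case False then show ?thesis using assms by (simp add: prob_vec_def)
  qed
qed

lemma stat:
  "prob_vec (THE p. prob_vec p \<and> (\<forall>i<4. mat_vec A p i = p i)) \<and>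
   (\<forall>i<4. mat_vec A (THE p. prob_vec p \<and> (\<forall>i<4. mat_vec A p i = p i)) i =
       (THE p. prob_vec p \<and> (\<forall>i<4. mat_vec A p i = p i)) i)"
proof -
  have "\<exists>!p. prob_vec p \<and> (\<forall>i<4. mat_vec A p i = p i)" using exists unique by blast
  then show ?thesis by (rule theI')
qed

end


lemma four: "{..<4::nat} = {0,1,2,3}" by auto

lemma tm_pos:
  assumes "\<forall>i<4. 0 < x i \<and> x i < 1" "\<forall>i<4. 0 < y i \<and> y i < 1" "i < 4" "j < 4"
  shows "0 < trans_mat x y i j"
proof -
  have o: "opp_state j < 4" using assms(4) by (simp add: opp_state_def)
  have a: "0 < x j" "x j < 1" using assms(1,4) by auto
  have b: "0 < y (opp_state j)" "y (opp_state j) < 1" using assms(2) o by auto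
  have "i = 0 \<or> i = 1 \<or> i = 2 \<or> i = 3" using assms(3) by auto
  then show ?thesis using a b by (auto simp: trans_mat_def Let_def)
qed

lemma tm_col: "(\<Sum>i<4. trans_mat x y i j) = 1"
  by (simp add: four trans_mat_def Let_def algebra_simps)

lemma tm_pstoch:
  assumes "\<forall>i<4. 0 < x i \<and> x i < 1" "\<forall>i<4. 0 < y i \<and> y i < 1"
  shows "pstoch (trans_mat x y) (Min ((\<lambda>(i,j). trans_mat x y i j) ` ({..<4}\<times>{..<4})))"
proof
  let ?T = "(\<lambda>(i,j). trans_mat x y i j) ` ({..<4::nat}\<times>{..<4::nat})"
  have fin: "finite ?T" "?T \<noteq> {}" by (auto simp: four)
  show "0 < Min ?T" using fin tm_pos[OF assms] by (auto simp: Min_gr_iff)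
  show "Min ?T \<le> trans_mat x y i j" if "i < 4" "j < 4" for i j
    using fin that by (intro Min_le) auto
  show "(\<Sum>i<4. trans_mat x y i j) = 1" for j by (rule tm_col)
qed

lemma tm_upd:
  "trans_mat (x(0 := a)) y i j = trans_mat x y i j +
     (if j = 0 then (a - x 0) * (p_CCC y i - p_CCD y i) else 0)"
  by (cases "j = 0")
    (auto simp: trans_mat_def Let_def p_CCC_def p_CCD_def opp_state_def algebra_simps)

lemma mv_upd:
  "mat_vec (trans_mat (x(0 := a)) y) v i =
     mat_vec (trans_mat x y) v i + (a - x 0) * v 0 * (p_CCC y i - p_CCD y i)"
  by (simp add: mat_vec_def tm_upd four algebra_simps)

lemma stat_props:
  assumes "\<forall>i<4. 0 < x i \<and> x i < 1" "\<forall>i<4. 0 < y i \<and> y i < 1"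
  shows "prob_vec (stat_dist x y) \<and> (\<forall>i<4. mat_vec (trans_mat x y) (stat_dist x y) i = stat_dist x y i)"
  unfolding stat_dist_def by (rule pstoch.stat[OF tm_pstoch[OF assms]])


theorem mainTheorem1:
  fixes x y :: "nat \<Rightarrow> real"
  assumes "\<forall>i<4. 0 < x i \<and> x i < 1"
      and "\<forall>i<4. 0 < y i \<and> y i < 1"
  shows "(\<forall>i<4.
            summable (\<lambda>t. mat_pow_vec (trans_mat x y) t (\<lambda>k. p_CCC y k - p_CCD y k) i)
          \<and> ((\<lambda>a. stat_dist (x(0 := a)) y i) has_real_derivative
               (stat_dist x y 0 *
                (\<Sum>t. mat_pow_vec (trans_mat x y) t (\<lambda>k. p_CCC y k - p_CCD y k) i))) (at (x 0)))
       \<and> (\<forall>u :: nat \<Rightarrow> real.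
            x 0 * (1 - x 0) * stat_dist x y 0 *
              (\<Sum>i<4. (\<Sum>t. mat_pow_vec (trans_mat x y) t (\<lambda>k. p_CCC y k - p_CCD y k) i) * u i)
          = x 0 * (1 - x 0) *
              (\<Sum>i<4. deriv (\<lambda>a. stat_dist (x(0 := a)) y i) (x 0) * u i))"
proof -
  let ?M = "trans_mat x y"
  define d where "d = (\<lambda>k. p_CCC y k - p_CCD y k)"
  obtain e where ps: "pstoch ?M e" using tm_pstoch[OF assms] by blast
  interpret pstoch ?M e by (rule ps)
  have sd: "(\<Sum>j<4. d j) = 0" by (simp add: four d_def p_CCC_def p_CCD_def)
  define p where "p = stat_dist x y"
  have pp: "prob_vec p" "\<forall>i<4. mat_vec ?M p i = p i" using stat_props[OF assms] p_def by auto
  have key: "stat_dist (x(0:=a)) y i = p i + (a - x 0) * stat_dist (x(0:=a)) y 0 * S d i"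
    if a: "0 < a" "a < 1" and i: "i < 4" for a i
  proof -
    have hx: "\<forall>i<4. 0 < (x(0:=a)) i \<and> (x(0:=a)) i < 1" using assms(1) a by auto
    define q where "q = stat_dist (x(0:=a)) y"
    have q: "prob_vec q" "\<forall>i<4. mat_vec (trans_mat (x(0:=a)) y) q i = q i"
      using stat_props[OF hx assms(2)] unfolding q_def by blast+
    define w where "w = (\<lambda>i. q i - p i - (a - x 0) * q 0 * S d i)"
    have "w i = 0"
    proof (rule uniq0)
      show "mat_vec ?M w j = w j" if j: "j < 4" for j
      proof -
        have h1: "mat_vec ?M q j = q j - (a - x 0) * q 0 * d j"
          using q(2) mv_upd[of x a y q j] j by (simp add: d_def)
        have h2: "mat_vec ?M p j = p j" using pp(2) j by simp
        have h3: "mat_vec ?M (S d) j = S d j - d j" using S_fix[OF sd j] .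
        have "mat_vec ?M w j = mat_vec ?M q j - mat_vec ?M p j - (a - x 0) * q 0 * mat_vec ?M (S d) j"
          by (simp add: w_def mat_vec_def four algebra_simps)
        also have "\<dots> = w j"
          unfolding w_def h1 h2 h3 by (simp add: algebra_simps)
        finally show ?thesis .
      qed
      have "(\<Sum>j<4. w j) = (\<Sum>j<4. q j) - (\<Sum>j<4. p j) - (a - x 0) * q 0 * (\<Sum>j<4. S d j)"
        by (simp add: w_def four algebra_simps)
      then show "(\<Sum>j<4. w j) = 0" using q(1) pp(1) S_sum[OF sd] by (simp add: prob_vec_def)
    qed fact
    then show ?thesis by (simp add: w_def q_def)
  qed
  define b where "b = x 0"
  have b: "0 < b" "b < 1" using assms(1) b_def by auto
  define s0 where "s0 = S d 0"
  define r where "r = min (min b (1 - b)) (1 / (\<bar>s0\<bar> + 1))"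
  have r: "r > 0" using b by (simp add: r_def)
  have inball: "0 < a \<and> a < 1 \<and> (a - b) * s0 < 1" if "a \<in> ball b r" for a
  proof -
    have h: "\<bar>a - b\<bar> < r" using that by (simp add: dist_real_def abs_minus_commute)
    then have "\<bar>a - b\<bar> < b" "\<bar>a - b\<bar> < 1 - b" "\<bar>a - b\<bar> < 1 / (\<bar>s0\<bar> + 1)"
      by (auto simp: r_def)
    then have "\<bar>a - b\<bar> * (\<bar>s0\<bar> + 1) < 1" by (simp add: field_simps)
    then have "\<bar>(a - b) * s0\<bar> < 1"
    proof -
      assume lt: "\<bar>a - b\<bar> * (\<bar>s0\<bar> + 1) < 1"
      have "\<bar>(a - b) * s0\<bar> = \<bar>a - b\<bar> * \<bar>s0\<bar>" by (simp add: abs_mult)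
      also have "\<dots> \<le> \<bar>a - b\<bar> * (\<bar>s0\<bar> + 1)" by (intro mult_left_mono) auto
      finally show ?thesis using lt by linarith
    qed
    then show ?thesis using \<open>\<bar>a - b\<bar> < b\<close> \<open>\<bar>a - b\<bar> < 1 - b\<close> by auto
  qed
  have deriv_i: "((\<lambda>a. stat_dist (x(0 := a)) y i) has_real_derivative (p 0 * S d i)) (at b)"
    if i: "i < 4" for i
  proof (rule has_field_derivative_transform_within_open)
    let ?f = "\<lambda>a. p i + (a - b) * (S d i * p 0 / (1 - (a - b) * s0))"
    show "(?f has_field_derivative (p 0 * S d i)) (at b)"
      by (auto intro!: derivative_eq_intros)
    show "open (ball b r)" "b \<in> ball b r" using r by auto
    show "?f a = stat_dist (x(0 := a)) y i" if "a \<in> ball b r" for a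
    proof -
      have a: "0 < a" "a < 1" "(a - b) * s0 < 1" using inball[OF that] by auto
      have k0: "stat_dist (x(0:=a)) y 0 = p 0 + (a - b) * stat_dist (x(0:=a)) y 0 * s0"
        using key[OF a(1,2), of 0] by (simp add: b_def s0_def)
      then have "stat_dist (x(0:=a)) y 0 * (1 - (a - b) * s0) = p 0" by (simp add: algebra_simps)
      then have "stat_dist (x(0:=a)) y 0 = p 0 / (1 - (a - b) * s0)" using a(3)
        by (simp add: field_simps)
      then show ?thesis using key[OF a(1,2) i] by (simp add: b_def)
    qed
  qed
  show ?thesis
  proof (intro conjI allI impI)
    fix i :: nat assume i: "i < 4"
    show "summable (\<lambda>t. mat_pow_vec ?M t (\<lambda>k. p_CCC y k - p_CCD y k) i)"
      using summ[OF sd i] by (simp add: d_def)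
    show "((\<lambda>a. stat_dist (x(0 := a)) y i) has_real_derivative
               (stat_dist x y 0 * (\<Sum>t. mat_pow_vec ?M t (\<lambda>k. p_CCC y k - p_CCD y k) i))) (at (x 0))"
      using deriv_i[OF i] by (simp add: b_def p_def S_def d_def)
  next
    fix u :: "nat \<Rightarrow> real"
    have "deriv (\<lambda>a. stat_dist (x(0 := a)) y i) (x 0) = p 0 * S d i" if "i < 4" for i
      using DERIV_imp_deriv[OF deriv_i[OF that]] by (simp add: b_def)
    then have "(\<Sum>i<4. deriv (\<lambda>a. stat_dist (x(0 := a)) y i) (x 0) * u i) =
        p 0 * (\<Sum>i<4. S d i * u i)" by (simp add: four algebra_simps)
    then show "x 0 * (1 - x 0) * stat_dist x y 0 *
              (\<Sum>i<4. (\<Sum>t. mat_pow_vec ?M t (\<lambda>k. p_CCC y k - p_CCD y k) i) * u i)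
          = x 0 * (1 - x 0) *
              (\<Sum>i<4. deriv (\<lambda>a. stat_dist (x(0 := a)) y i) (x 0) * u i)"
      by (simp add: p_def S_def d_def)
  qed
qed

end
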